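(* Let $p,q\ge0$ with $p+q<1$, $0<\theta<1$, and $k<n$ positive integers. Define \[ m_{\mathrm{COMP}}=\min_{\alpha,d}\max\left\{\frac{\theta}{1-\theta}\frac{1}{d\,D_{\mathrm{KL}}(\alpha\|q)},\ \frac{1}{1-\theta}\frac{1}{d\,D_{\mathrm{KL}}\big(\alpha\|e^{-d}(1-p)+(1-e^{-d})q\big)}\right\}k\log(n/k) \] and \[ m^{\mathrm{Ber}}_{\mathrm{COMP}}=\min_{\alpha,d}\max\left\{\frac{\theta}{1-\theta}\frac{1}{k\,D_{\mathrm{KL}}(\alpha d/k\,\|\,qd/k)},\ \frac{1}{1-\theta}\frac{1}{k\,D_{\mathrm{KL}}\big(\alpha d/k\,\|\,(e^{-d}(1-p)+(1-e^{-d})q)d/k\big)}\right\}k\log(n/k), \] both minima over $d\in(0,\infty)$ and $\alpha\in\big(q,\ e^{-d}(1-p)+(1-e^{-d})q\big)$ (with $d<k$). Then $m^{\mathrm{Ber}}_{\mathrm{COMP}}\ge m_{\mathrm{COMP}}$.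
   Context: $\log$ is the natural logarithm; $D_{\mathrm{KL}}(r\|s)=r\log(r/s)+(1-r)\log\frac{1-r}{1-s}$, extended by continuity at $r$ or $s\in\{0,1\}$. (These are the sufficient numbers of tests for noisy COMP under the constant-column design and under the Bernoulli design, respectively, in the noisy group testing model with false-positive probability $p$ and false-negative probability $q$.) *)

theory Defs
  imports "HOL-Analysis.Analysis" "HOL-Library.Extended_Real"
begin

text \<open>One summand a log(a/b) of the binary KL divergence, extended by continuity
  (0 log(0/b) = 0, a log(a/0) = +infinity for a > 0).\<close>
definition kl_term :: "real \<Rightarrow> real \<Rightarrow> ereal" where
  "kl_term a b = (if a = 0 then 0 else if b = 0 then \<infinity> else ereal (a * ln (a / b)))"

definition D_KL :: "real \<Rightarrow> real \<Rightarrow> ereal" where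
  "D_KL r s = kl_term r s + kl_term (1 - r) (1 - s)"

definition rho :: "real \<Rightarrow> real \<Rightarrow> real \<Rightarrow> real" where
  "rho p q d = exp (- d) * (1 - p) + (1 - exp (- d)) * q"

definition m_COMP :: "real \<Rightarrow> real \<Rightarrow> real \<Rightarrow> nat \<Rightarrow> nat \<Rightarrow> ereal" where
  "m_COMP p q \<theta> k n =
     (INF (\<alpha>, d) \<in> {(\<alpha>, d). 0 < d \<and> q < \<alpha> \<and> \<alpha> < rho p q d}.
        max (ereal (\<theta> / (1 - \<theta>)) * inverse (ereal d * D_KL \<alpha> q))
            (ereal (1 / (1 - \<theta>)) * inverse (ereal d * D_KL \<alpha> (rho p q d))))
     * ereal (real k * ln (real n / real k))"

definition m_COMP_Ber :: "real \<Rightarrow> real \<Rightarrow> real \<Rightarrow> nat \<Rightarrow> nat \<Rightarrow> ereal" where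
  "m_COMP_Ber p q \<theta> k n =
     (INF (\<alpha>, d) \<in> {(\<alpha>, d). 0 < d \<and> d < real k \<and> q < \<alpha> \<and> \<alpha> < rho p q d}.
        max (ereal (\<theta> / (1 - \<theta>)) *
               inverse (ereal (real k) * D_KL (\<alpha> * d / real k) (q * d / real k)))
            (ereal (1 / (1 - \<theta>)) *
               inverse (ereal (real k) * D_KL (\<alpha> * d / real k) (rho p q d * d / real k))))
     * ereal (real k * ln (real n / real k))"

end

theory Submission
  imports Defs
begin

lemma logsum2:
  fixes x1 x2 y1 y2 :: real
  assumes "0 < x1" "0 < x2" "0 < y1" "0 < y2"
  shows "(x1 + x2) * ln ((x1 + x2) / (y1 + y2)) \<le> x1 * ln (x1 / y1) + x2 * ln (x2 / y2)"
proof -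
  define X where "X = x1 + x2"
  define Y where "Y = y1 + y2"
  have XY: "0 < X" "0 < Y" using assms by (auto simp: X_def Y_def)
  have lnlow: "\<And>z::real. 0 < z \<Longrightarrow> 1 - 1 / z \<le> ln z"
  proof -
    fix z :: real assume "0 < z"
    have "ln (1 / z) \<le> 1 / z - 1" using \<open>0 < z\<close> by (intro ln_le_minus_one) simp
    then show "1 - 1 / z \<le> ln z" using \<open>0 < z\<close> by (simp add: ln_div)
  qed
  have split: "\<And>x y. 0 < x \<Longrightarrow> 0 < y \<Longrightarrow> ln (x / y) = ln (X / Y) + ln ((x * Y) / (y * X))"
    using XY by (simp add: ln_div ln_mult)
  have e1: "x1 * (1 - (y1 * X) / (x1 * Y)) \<le> x1 * ln ((x1 * Y) / (y1 * X))"
  proof -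
    have "1 - (y1 * X) / (x1 * Y) = 1 - 1 / ((x1 * Y) / (y1 * X))" by simp
    also have "\<dots> \<le> ln ((x1 * Y) / (y1 * X))" using assms XY by (intro lnlow) simp
    finally show ?thesis using assms by (intro mult_left_mono) auto
  qed
  have e2: "x2 * (1 - (y2 * X) / (x2 * Y)) \<le> x2 * ln ((x2 * Y) / (y2 * X))"
  proof -
    have "1 - (y2 * X) / (x2 * Y) = 1 - 1 / ((x2 * Y) / (y2 * X))" by simp
    also have "\<dots> \<le> ln ((x2 * Y) / (y2 * X))" using assms XY by (intro lnlow) simp
    finally show ?thesis using assms by (intro mult_left_mono) auto
  qed
  have z: "x1 * (1 - (y1 * X) / (x1 * Y)) + x2 * (1 - (y2 * X) / (x2 * Y)) = 0"
  proof -
    have "x1 * (1 - (y1 * X) / (x1 * Y)) = x1 - y1 * X / Y" using assms XY by (simp add: field_simps)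
    moreover have "x2 * (1 - (y2 * X) / (x2 * Y)) = x2 - y2 * X / Y" using assms XY by (simp add: field_simps)
    moreover have "y1 * X / Y + y2 * X / Y = X" using XY by (simp add: Y_def add_divide_distrib[symmetric] field_simps)
    ultimately show ?thesis by (simp add: X_def)
  qed
  have "x1 * ln (x1 / y1) + x2 * ln (x2 / y2)
      = X * ln (X / Y) + (x1 * ln ((x1 * Y) / (y1 * X)) + x2 * ln ((x2 * Y) / (y2 * X)))"
    using assms by (simp add: split[of x1 y1] split[of x2 y2] X_def algebra_simps)
  also have "\<dots> \<ge> X * ln (X / Y)" using e1 e2 z by linarith
  finally show ?thesis by (simp add: X_def Y_def)
qed

lemma key:
  fixes a b d K :: real
  assumes a: "0 < a" "a < 1" and b: "0 \<le> b" "b < 1" and d: "0 < d" "d < K"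
  shows "0 \<le> D_KL (a * d / K) (b * d / K) \<and>
         ereal K * D_KL (a * d / K) (b * d / K) \<le> ereal d * D_KL a b"
proof (cases "b = 0")
  case True
  have "0 < a * d / K" using a d by simp
  then have "D_KL (a * d / K) (b * d / K) = \<infinity>" "D_KL a b = \<infinity>"
    using True a by (auto simp: D_KL_def kl_term_def)
  then show ?thesis using d by simp
next
  case False
  define t where "t = d / K"
  have t: "0 < t" "t < 1" using d by (auto simp: t_def)
  have ad: "a * d / K = t * a" "b * d / K = t * b" by (auto simp: t_def)
  have bp: "0 < b" using b False by simp
  have ta: "0 < t * a" "t * a < 1" proof -
    have "t * a < t" using t a by simp
    then show "0 < t * a" "t * a < 1" using t a by (simp, linarith)
  qed
  have tb: "0 < t * b" "t * b < 1" proof -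
    have "t * b < t" using t b bp by simp
    then show "0 < t * b" "t * b < 1" using t bp by (simp, linarith)
  qed
  have DB: "D_KL (t * a) (t * b) = ereal (t * a * ln (t * a / (t * b)) + (1 - t * a) * ln ((1 - t * a) / (1 - t * b)))"
    using ta tb bp t by (simp add: D_KL_def kl_term_def)
  have DA: "D_KL a b = ereal (a * ln (a / b) + (1 - a) * ln ((1 - a) / (1 - b)))"
    using a b bp by (simp add: D_KL_def kl_term_def)
  have g1: "(1 - t * a) * ln ((1 - t * a) / (1 - t * b)) \<le> t * (1 - a) * ln (t * (1 - a) / (t * (1 - b))) + (1 - t) * ln ((1 - t) / (1 - t))"
    using logsum2[of "t * (1 - a)" "1 - t" "t * (1 - b)" "1 - t"] t a b
    by (simp add: algebra_simps)
  have g1': "(1 - t * a) * ln ((1 - t * a) / (1 - t * b)) \<le> t * ((1 - a) * ln ((1 - a) / (1 - b)))"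
    using g1 t by simp
  have g0: "0 \<le> t * a * ln (t * a / (t * b)) + (1 - t * a) * ln ((1 - t * a) / (1 - t * b))"
    using logsum2[of "t * a" "1 - t * a" "t * b" "1 - t * b"] ta tb by simp
  have ineq: "t * a * ln (t * a / (t * b)) + (1 - t * a) * ln ((1 - t * a) / (1 - t * b))
       \<le> t * (a * ln (a / b) + (1 - a) * ln ((1 - a) / (1 - b)))"
    using g1' t by (simp add: algebra_simps)
  have "K * (t * (a * ln (a / b) + (1 - a) * ln ((1 - a) / (1 - b))))
        = d * (a * ln (a / b) + (1 - a) * ln ((1 - a) / (1 - b)))"
    using d by (simp add: t_def)
  moreover have "K * (t * a * ln (t * a / (t * b)) + (1 - t * a) * ln ((1 - t * a) / (1 - t * b)))
      \<le> K * (t * (a * ln (a / b) + (1 - a) * ln ((1 - a) / (1 - b))))"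
    using ineq d by (intro mult_left_mono) auto
  ultimately have fin: "K * (t * a * ln (t * a / (t * b)) + (1 - t * a) * ln ((1 - t * a) / (1 - t * b)))
      \<le> d * (a * ln (a / b) + (1 - a) * ln ((1 - a) / (1 - b)))" by linarith
  show ?thesis unfolding ad DB DA using g0 fin by (simp only: times_ereal.simps ereal_less_eq(3) zero_ereal_def)
qed

theorem proposition2p15:
  fixes p q \<theta> :: real and k n :: nat
  assumes "0 \<le> p" and "0 \<le> q" and "p + q < 1"
    and "0 < \<theta>" and "\<theta> < 1"
    and "0 < k" and "k < n"
  shows "m_COMP_Ber p q \<theta> k n \<ge> m_COMP p q \<theta> k n"
proof -
  define SC where "SC = {(\<alpha>, d). 0 < d \<and> q < \<alpha> \<and> \<alpha> < rho p q d}"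
  define SB where "SB = {(\<alpha>, d). 0 < d \<and> d < real k \<and> q < \<alpha> \<and> \<alpha> < rho p q d}"
  define F where "F = (\<lambda>(\<alpha>, d). max (ereal (\<theta> / (1 - \<theta>)) * inverse (ereal d * D_KL \<alpha> q))
            (ereal (1 / (1 - \<theta>)) * inverse (ereal d * D_KL \<alpha> (rho p q d))))"
  define G where "G = (\<lambda>(\<alpha>, d). max (ereal (\<theta> / (1 - \<theta>)) *
               inverse (ereal (real k) * D_KL (\<alpha> * d / real k) (q * d / real k)))
            (ereal (1 / (1 - \<theta>)) *
               inverse (ereal (real k) * D_KL (\<alpha> * d / real k) (rho p q d * d / real k))))"
  define c where "c = ereal (real k * ln (real n / real k))"
  have c0: "0 \<le> c" using assms by (simp add: c_def)
  have C: "m_COMP p q \<theta> k n = (INF x \<in> SC. F x) * c"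
    unfolding m_COMP_def SC_def F_def c_def by simp
  have B: "m_COMP_Ber p q \<theta> k n = (INF x \<in> SB. G x) * c"
    unfolding m_COMP_Ber_def SB_def G_def c_def by simp
  have FG: "F x \<le> G x" if "x \<in> SB" for x
  proof -
    obtain \<alpha> d where x: "x = (\<alpha>, d)" by (cases x)
    have h: "0 < d" "d < real k" "q < \<alpha>" "\<alpha> < rho p q d" using that by (auto simp: SB_def x)
    have e: "0 < exp (- d)" "exp (- d) < 1" using h by auto
    have r1: "rho p q d < 1"
    proof -
      have "exp (- d) * (1 - p) \<le> exp (- d)" using e assms by (simp add: mult_left_le)
      moreover have "(1 - exp (- d)) * q < (1 - exp (- d))" using e assms
        by (intro mult_strict_left_mono[of q 1, simplified mult_1_right]) auto
      ultimately show ?thesis unfolding rho_def by linarith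
    qed
    have a: "0 < \<alpha>" "\<alpha> < 1" using h r1 assms by auto
    have k1: "0 \<le> D_KL (\<alpha> * d / real k) (q * d / real k) \<and>
         ereal (real k) * D_KL (\<alpha> * d / real k) (q * d / real k) \<le> ereal d * D_KL \<alpha> q"
      using key[of \<alpha> q d "real k"] a h assms by linarith
    have k2: "0 \<le> D_KL (\<alpha> * d / real k) (rho p q d * d / real k) \<and>
         ereal (real k) * D_KL (\<alpha> * d / real k) (rho p q d * d / real k) \<le> ereal d * D_KL \<alpha> (rho p q d)"
      using key[of \<alpha> "rho p q d" d "real k"] a h assms r1 by linarith
    have t1: "ereal (\<theta> / (1 - \<theta>)) * inverse (ereal d * D_KL \<alpha> q)
        \<le> ereal (\<theta> / (1 - \<theta>)) * inverse (ereal (real k) * D_KL (\<alpha> * d / real k) (q * d / real k))"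
      using k1 assms by (intro ereal_mult_left_mono ereal_inverse_antimono) auto
    have t2: "ereal (1 / (1 - \<theta>)) * inverse (ereal d * D_KL \<alpha> (rho p q d))
        \<le> ereal (1 / (1 - \<theta>)) * inverse (ereal (real k) * D_KL (\<alpha> * d / real k) (rho p q d * d / real k))"
      using k2 assms by (intro ereal_mult_left_mono ereal_inverse_antimono) auto
    show ?thesis using t1 t2 unfolding F_def G_def x by (simp only: case_prod_conv) (rule max.mono)
  qed
  have sub: "SB \<subseteq> SC" by (auto simp: SB_def SC_def)
  have "(INF x \<in> SC. F x) \<le> (INF x \<in> SB. F x)" using sub by (rule INF_superset_mono) simp
  also have "\<dots> \<le> (INF x \<in> SB. G x)" by (rule INF_mono) (use FG in blast)
  finally have "(INF x \<in> SC. F x) \<le> (INF x \<in> SB. G x)" .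
  then show ?thesis unfolding C B using c0 by (rule ereal_mult_right_mono)
qed

end
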